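(* Let $n,a,b$ be nonnegative integers with $n\ge a+b+5$ and $b\ge 2$. Then the graph $F_n(a,b)$ is $K_4^-$-saturated.
   Context: All graphs are finite and simple. $K_4^-$ denotes the graph obtained from $K_4$ by deleting one edge. A graph $G$ is $K_4^-$-saturated if $G$ contains no copy of $K_4^-$ but for every pair of nonadjacent vertices $u,v$ of $G$, $G+uv$ contains a copy of $K_4^-$. For nonnegative integers $n,a,b$ with $n\ge a+b+5$, the graph $F_n(a,b)$ is defined as follows. Its vertex set is the disjoint union $I\cup A_1\cup A_2\cup B_1\cup B_2\cup C$, where $I=\{x\}$, $A_1=\{u_1,u_2\}$, $B_1=\{v_1,v_2\}$, $|A_2|=a$, $|B_2|=b$, $|C|=n-a-b-5$ (so it has $n$ vertices). Its edges are: all pairs between $A_1\cup A_2\cup C$ and $B_2$; all pairs between $A_2$ and $B_1$; all pairs between $x$ and $A_1\cup B_1\cup C$; and the two edges $u_1v_1$ and $u_2v_2$. There are no other edges. *)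

theory Defs
  imports Main
begin

definition simple_graph :: "'a set \<Rightarrow> 'a set set \<Rightarrow> bool" where
  "simple_graph V E \<longleftrightarrow> finite V \<and> (\<forall>e\<in>E. e \<subseteq> V \<and> card e = 2)"

definition contains_copy :: "'b set \<Rightarrow> 'b set set \<Rightarrow> 'a set \<Rightarrow> 'a set set \<Rightarrow> bool" where
  "contains_copy VH EH V E \<longleftrightarrow>
     (\<exists>f. inj_on f VH \<and> f ` VH \<subseteq> V \<and> (\<forall>e\<in>EH. f ` e \<in> E))"

definition K4m_V :: "nat set" where
  "K4m_V = {0,1,2,3}"

definition K4m_E :: "nat set set" where
  "K4m_E = {{0,1},{0,2},{0,3},{1,2},{1,3}}"

definition K4m_saturated :: "'a set \<Rightarrow> 'a set set \<Rightarrow> bool" where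
  "K4m_saturated V E \<longleftrightarrow>
     \<not> contains_copy K4m_V K4m_E V E \<and>
     (\<forall>u\<in>V. \<forall>v\<in>V. u \<noteq> v \<and> {u,v} \<notin> E \<longrightarrow> contains_copy K4m_V K4m_E V (insert {u,v} E))"

text \<open>Vertices of F_n(a,b): x; u_1,u_2 (A1); v_1,v_2 (B1); A2 (indices < a);
  B2 (indices < b); C (indices < n-a-b-5).\<close>

datatype fvert = Xv | Uv nat | Vv nat | A2v nat | B2v nat | Cv nat

definition F_A1 :: "fvert set" where "F_A1 = {Uv 1, Uv 2}"
definition F_B1 :: "fvert set" where "F_B1 = {Vv 1, Vv 2}"
definition F_A2 :: "nat \<Rightarrow> fvert set" where "F_A2 a = A2v ` {..<a}"
definition F_B2 :: "nat \<Rightarrow> fvert set" where "F_B2 b = B2v ` {..<b}"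
definition F_C :: "nat \<Rightarrow> nat \<Rightarrow> nat \<Rightarrow> fvert set" where
  "F_C n a b = Cv ` {..<n - a - b - 5}"

definition F_V :: "nat \<Rightarrow> nat \<Rightarrow> nat \<Rightarrow> fvert set" where
  "F_V n a b = {Xv} \<union> F_A1 \<union> F_A2 a \<union> F_B1 \<union> F_B2 b \<union> F_C n a b"

definition F_E :: "nat \<Rightarrow> nat \<Rightarrow> nat \<Rightarrow> fvert set set" where
  "F_E n a b =
     {{p, q} | p q. p \<in> F_A1 \<union> F_A2 a \<union> F_C n a b \<and> q \<in> F_B2 b}
   \<union> {{p, q} | p q. p \<in> F_A2 a \<and> q \<in> F_B1}
   \<union> {{Xv, q} | q. q \<in> F_A1 \<union> F_B1 \<union> F_C n a b}
   \<union> {{Uv 1, Vv 1}, {Uv 2, Vv 2}}"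

end

theory Submission
  imports Defs
begin

definition adj0 :: "nat \<Rightarrow> nat \<Rightarrow> nat \<Rightarrow> fvert \<Rightarrow> fvert \<Rightarrow> bool" where
  "adj0 n a b p q \<longleftrightarrow> (p \<in> F_A1 \<union> F_A2 a \<union> F_C n a b \<and> q \<in> F_B2 b)
    \<or> (p \<in> F_A2 a \<and> q \<in> F_B1) \<or> (p = Xv \<and> q \<in> F_A1 \<union> F_B1 \<union> F_C n a b)
    \<or> (p = Uv 1 \<and> q = Vv 1) \<or> (p = Uv 2 \<and> q = Vv 2)"

definition adj :: "nat \<Rightarrow> nat \<Rightarrow> nat \<Rightarrow> fvert \<Rightarrow> fvert \<Rightarrow> bool" where
  "adj n a b p q \<longleftrightarrow> adj0 n a b p q \<or> adj0 n a b q p"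

lemma FE_iff: "{p,q} \<in> F_E n a b \<longleftrightarrow> adj n a b p q"
  unfolding F_E_def adj_def adj0_def
  by (auto simp: doubleton_eq_iff)

lemma copy_iff:
  "contains_copy K4m_V K4m_E V E \<longleftrightarrow>
   (\<exists>p0 p1 p2 p3. p0 \<in> V \<and> p1 \<in> V \<and> p2 \<in> V \<and> p3 \<in> V \<and> distinct [p0,p1,p2,p3] \<and>
     {p0,p1} \<in> E \<and> {p0,p2} \<in> E \<and> {p0,p3} \<in> E \<and> {p1,p2} \<in> E \<and> {p1,p3} \<in> E)"
proof
  assume "contains_copy K4m_V K4m_E V E"
  then obtain f where f: "inj_on f {0,1,2,3}" "f ` {0,1,2,3} \<subseteq> V" "\<forall>e\<in>K4m_E. f ` e \<in> E"
    unfolding contains_copy_def K4m_V_def by blast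
  have d: "distinct [f 0, f 1, f 2, f (3::nat)]" using f(1) unfolding inj_on_def by auto
  show "\<exists>p0 p1 p2 p3. p0 \<in> V \<and> p1 \<in> V \<and> p2 \<in> V \<and> p3 \<in> V \<and> distinct [p0,p1,p2,p3] \<and>
     {p0,p1} \<in> E \<and> {p0,p2} \<in> E \<and> {p0,p3} \<in> E \<and> {p1,p2} \<in> E \<and> {p1,p3} \<in> E"
    apply (rule exI[of _ "f 0"], rule exI[of _ "f 1"], rule exI[of _ "f 2"], rule exI[of _ "f 3"])
    using f d unfolding K4m_E_def by auto
next
  assume "\<exists>p0 p1 p2 p3. p0 \<in> V \<and> p1 \<in> V \<and> p2 \<in> V \<and> p3 \<in> V \<and> distinct [p0,p1,p2,p3] \<and>
     {p0,p1} \<in> E \<and> {p0,p2} \<in> E \<and> {p0,p3} \<in> E \<and> {p1,p2} \<in> E \<and> {p1,p3} \<in> E"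
  then obtain p0 p1 p2 p3 where p: "p0 \<in> V" "p1 \<in> V" "p2 \<in> V" "p3 \<in> V" "distinct [p0,p1,p2,p3]"
     "{p0,p1} \<in> E" "{p0,p2} \<in> E" "{p0,p3} \<in> E" "{p1,p2} \<in> E" "{p1,p3} \<in> E" by blast
  define f where "f = (\<lambda>i::nat. if i = 0 then p0 else if i = 1 then p1 else if i = 2 then p2 else p3)"
  have "inj_on f {0,1,2,3}" using p(5) unfolding inj_on_def f_def by auto
  moreover have "f ` {0,1,2,3} \<subseteq> V" using p unfolding f_def by auto
  moreover have "\<forall>e\<in>K4m_E. f ` e \<in> E" using p unfolding f_def K4m_E_def by (auto simp: insert_commute)
  ultimately show "contains_copy K4m_V K4m_E V E" unfolding contains_copy_def K4m_V_def by blast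
qed

lemma tri:
  assumes "adj n a b p q" "adj n a b q r" "adj n a b p r"
  shows "\<exists>i. {p,q,r} = {Xv, Uv i, Vv i}"
  using assms unfolding adj_def adj0_def F_A1_def F_B1_def F_A2_def F_B2_def F_C_def
  by auto


lemmas cls = F_A1_def F_B1_def F_A2_def F_B2_def F_C_def

lemma inV: "p \<in> F_V n a b \<longleftrightarrow> (case p of Xv \<Rightarrow> True | Uv i \<Rightarrow> i = 1 \<or> i = 2
   | Vv i \<Rightarrow> i = 1 \<or> i = 2 | A2v i \<Rightarrow> i < a | B2v i \<Rightarrow> i < b | Cv i \<Rightarrow> i < n - a - b - 5)"
  by (cases p) (auto simp: F_V_def cls)

lemma free: "\<not> contains_copy K4m_V K4m_E (F_V n a b) (F_E n a b)"
proof
  assume "contains_copy K4m_V K4m_E (F_V n a b) (F_E n a b)"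
  then obtain p0 p1 p2 p3 where p: "distinct [p0,p1,p2,p3]" "adj n a b p0 p1" "adj n a b p0 p2"
    "adj n a b p0 p3" "adj n a b p1 p2" "adj n a b p1 p3"
    unfolding copy_iff FE_iff by blast
  obtain i where i: "{p0,p1,p2} = {Xv, Uv i, Vv i}" using tri[OF p(2) p(5) p(3)] by blast
  obtain j where j: "{p0,p1,p3} = {Xv, Uv j, Vv j}" using tri[OF p(2) p(6) p(4)] by blast
  have m: "p0 \<in> {Xv, Uv i, Vv i}" "p1 \<in> {Xv, Uv i, Vv i}" "p2 \<in> {Xv, Uv i, Vv i}"
    "p0 \<in> {Xv, Uv j, Vv j}" "p1 \<in> {Xv, Uv j, Vv j}" "p3 \<in> {Xv, Uv j, Vv j}"
    using i j by blast+
  show False using p(1) m by auto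
qed

definition S :: "nat \<Rightarrow> nat \<Rightarrow> nat \<Rightarrow> fvert \<Rightarrow> fvert \<Rightarrow> bool" where
  "S n a b u v \<longleftrightarrow> contains_copy K4m_V K4m_E (F_V n a b) (insert {u,v} (F_E n a b))"

lemma S_sym: "S n a b u v \<Longrightarrow> S n a b v u"
  unfolding S_def by (simp add: insert_commute)

lemma patA:
  assumes "u \<in> F_V n a b" "v \<in> F_V n a b" "w \<in> F_V n a b" "z \<in> F_V n a b"
    "distinct [u,v,w,z]" "adj n a b u w" "adj n a b u z" "adj n a b v w" "adj n a b v z"
  shows "S n a b u v"
  unfolding S_def copy_iff
  apply (rule exI[of _ u], rule exI[of _ v], rule exI[of _ w], rule exI[of _ z])
  using assms by (simp add: FE_iff adj_def)

lemma patB: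
  assumes "u \<in> F_V n a b" "v \<in> F_V n a b" "y \<in> F_V n a b" "z \<in> F_V n a b"
    "distinct [u,y,v,z]" "adj n a b u y" "adj n a b v y" "adj n a b u z" "adj n a b y z"
  shows "S n a b u v"
  unfolding S_def copy_iff
  apply (rule exI[of _ u], rule exI[of _ y], rule exI[of _ v], rule exI[of _ z])
  using assms by (simp add: FE_iff adj_def insert_commute)

lemma L1: "i < a \<Longrightarrow> S n a b (Xv) (A2v i)"
  by (rule patA[where w="Vv 1" and z="Vv 2"]) (auto simp: inV adj_def adj0_def cls)

lemma L2: "j < b \<Longrightarrow> S n a b (Xv) (B2v j)"
  by (rule patA[where w="Uv 1" and z="Uv 2"]) (auto simp: inV adj_def adj0_def cls)

lemma L3: "2 \<le> b \<Longrightarrow> S n a b (Uv 1) (Uv 2)"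
  by (rule patA[where w="Xv" and z="B2v 0"]) (auto simp: inV adj_def adj0_def cls)

lemma L4a: "True \<Longrightarrow> S n a b (Uv 1) (Vv 2)"
  by (rule patB[where y="Xv" and z="Vv 1"]) (auto simp: inV adj_def adj0_def cls)

lemma L4b: "True \<Longrightarrow> S n a b (Uv 2) (Vv 1)"
  by (rule patB[where y="Xv" and z="Vv 2"]) (auto simp: inV adj_def adj0_def cls)

lemma L5: "i = 1 \<or> i = 2 \<Longrightarrow> k < a \<Longrightarrow> 2 \<le> b \<Longrightarrow> S n a b (Uv i) (A2v k)"
  by (rule patA[where w="Vv i" and z="B2v 0"]) (auto simp: inV adj_def adj0_def cls)

lemma L6: "i = 1 \<or> i = 2 \<Longrightarrow> k < n - a - b - 5 \<Longrightarrow> 2 \<le> b \<Longrightarrow> S n a b (Uv i) (Cv k)"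
  by (rule patA[where w="Xv" and z="B2v 0"]) (auto simp: inV adj_def adj0_def cls)

lemma L7: "k < a \<Longrightarrow> l < a \<Longrightarrow> k \<noteq> l \<Longrightarrow> S n a b (A2v k) (A2v l)"
  by (rule patA[where w="Vv 1" and z="Vv 2"]) (auto simp: inV adj_def adj0_def cls)

lemma L8: "k < a \<Longrightarrow> l < n - a - b - 5 \<Longrightarrow> 2 \<le> b \<Longrightarrow> S n a b (A2v k) (Cv l)"
  by (rule patA[where w="B2v 0" and z="B2v 1"]) (auto simp: inV adj_def adj0_def cls)

lemma L9: "k < n - a - b - 5 \<Longrightarrow> l < n - a - b - 5 \<Longrightarrow> k \<noteq> l \<Longrightarrow> 2 \<le> b \<Longrightarrow> S n a b (Cv k) (Cv l)"
  by (rule patA[where w="Xv" and z="B2v 0"]) (auto simp: inV adj_def adj0_def cls)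

lemma L10: "True \<Longrightarrow> S n a b (Vv 1) (Vv 2)"
  by (rule patB[where y="Xv" and z="Uv 1"]) (auto simp: inV adj_def adj0_def cls)

lemma L11: "i = 1 \<or> i = 2 \<Longrightarrow> j < b \<Longrightarrow> S n a b (Vv i) (B2v j)"
  by (rule patB[where y="Uv i" and z="Xv"]) (auto simp: inV adj_def adj0_def cls)

lemma L12: "i = 1 \<or> i = 2 \<Longrightarrow> k < n - a - b - 5 \<Longrightarrow> S n a b (Vv i) (Cv k)"
  by (rule patB[where y="Xv" and z="Uv i"]) (auto simp: inV adj_def adj0_def cls)

lemma L13: "k < b \<Longrightarrow> l < b \<Longrightarrow> k \<noteq> l \<Longrightarrow> S n a b (B2v k) (B2v l)"
  by (rule patA[where w="Uv 1" and z="Uv 2"]) (auto simp: inV adj_def adj0_def cls)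

lemmas Ls = L1 L2 L3 L4a L4b L5 L6 L7 L8 L9 L10 L11 L12 L13
lemmas Ls2 = S_sym[OF L1] S_sym[OF L2] S_sym[OF L3] S_sym[OF L4a] S_sym[OF L4b] S_sym[OF L5] S_sym[OF L6] S_sym[OF L7] S_sym[OF L8] S_sym[OF L9] S_sym[OF L10] S_sym[OF L11] S_sym[OF L12] S_sym[OF L13]

theorem lemma2p2:
  fixes n a b :: nat
  assumes "n \<ge> a + b + 5" and "b \<ge> 2"
  shows "K4m_saturated (F_V n a b) (F_E n a b)"
  unfolding K4m_saturated_def
proof (intro conjI ballI impI)
  show "\<not> contains_copy K4m_V K4m_E (F_V n a b) (F_E n a b)" by (rule free)
next
  fix u v assume uv: "u \<in> F_V n a b" "v \<in> F_V n a b" "u \<noteq> v \<and> {u, v} \<notin> F_E n a b"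
  have "S n a b u v"
    using uv assms(2) unfolding FE_iff
    apply (cases u; cases v)
    apply (simp_all add: inV adj_def adj0_def cls)
    apply safe
    apply (simp_all only: One_nat_def[symmetric])
    apply (rule Ls Ls2; (simp; fail))+
    done
  then show "contains_copy K4m_V K4m_E (F_V n a b) (insert {u, v} (F_E n a b))"
    unfolding S_def .
qed

end
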